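(* Let $\Phi$ be an $m\times n$ matrix with entries in $\{0,1\}$ such that every column contains exactly $d$ ones, and let $G=(A,B,E)$ be the bipartite graph with $A=\{1,\dots,n\}$ (columns), $B=\{1,\dots,m\}$ (rows) and $(i,j)\in E$ iff $\Phi_{j,i}=1$. Suppose that for some scaling factor $S>0$ the matrix $S\Phi$ satisfies the $\mathrm{RIP}_{1,s,\delta}$ property. Then $G$ (whose adjacency matrix is $\Phi$) is an $(s,\epsilon)$-unbalanced expander with $$\epsilon=\Big(1-\frac{1}{1+\delta}\Big)\Big/\big(2-\sqrt2\big).$$
   Context: An $m\times n$ matrix $M$ satisfies $\mathrm{RIP}_{p,k,\delta}$ if for every $k$-sparse $x\in\mathbb{R}^n$ (at most $k$ nonzero coordinates), $\|x\|_p\le\|Mx\|_p\le(1+\delta)\|x\|_p$. A $(k,\epsilon)$-unbalanced expander is a simple bipartite graph $G=(A,B,E)$ in which every vertex of $A$ has exactly $d$ neighbours (left degree $d$) such that for every $X\subseteq A$ with $|X|\le k$, the neighbourhood $N(X)\subseteq B$ satisfies $|N(X)|\ge(1-\epsilon)d|X|$. *)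

theory Defs
  imports Complex_Main
begin

text \<open>Vectors in R^n are functions nat => real supported on {..<n} (0-based indices);
  an m x n matrix is a function M :: nat => nat => real, entry (j,i) = M j i, j<m, i<n.\<close>

definition lpnorm :: "real \<Rightarrow> nat \<Rightarrow> (nat \<Rightarrow> real) \<Rightarrow> real" where
  "lpnorm p n x = (\<Sum>i<n. \<bar>x i\<bar> powr p) powr (1 / p)"

definition mat_vec :: "nat \<Rightarrow> (nat \<Rightarrow> nat \<Rightarrow> real) \<Rightarrow> (nat \<Rightarrow> real) \<Rightarrow> (nat \<Rightarrow> real)" where
  "mat_vec n M x = (\<lambda>j. \<Sum>i<n. M j i * x i)"

definition sparse :: "nat \<Rightarrow> nat \<Rightarrow> (nat \<Rightarrow> real) \<Rightarrow> bool" where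
  "sparse n k x \<longleftrightarrow> (\<forall>i\<ge>n. x i = 0) \<and> card {i\<in>{..<n}. x i \<noteq> 0} \<le> k"

definition RIP :: "nat \<Rightarrow> nat \<Rightarrow> (nat \<Rightarrow> nat \<Rightarrow> real) \<Rightarrow> real \<Rightarrow> nat \<Rightarrow> real \<Rightarrow> bool" where
  "RIP m n M p k \<delta> \<longleftrightarrow>
     (\<forall>x. sparse n k x \<longrightarrow>
        lpnorm p n x \<le> lpnorm p m (mat_vec n M x) \<and>
        lpnorm p m (mat_vec n M x) \<le> (1 + \<delta>) * lpnorm p n x)"

text \<open>Bipartite graph with left part A = {..<n}, right part B = {..<m}, edge relation E i j
  (i in A, j in B).\<close>
definition nbhd :: "nat \<Rightarrow> (nat \<Rightarrow> nat \<Rightarrow> bool) \<Rightarrow> nat set \<Rightarrow> nat set" where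
  "nbhd m E X = {j\<in>{..<m}. \<exists>i\<in>X. E i j}"

definition unbalanced_expander ::
  "nat \<Rightarrow> nat \<Rightarrow> (nat \<Rightarrow> nat \<Rightarrow> bool) \<Rightarrow> nat \<Rightarrow> nat \<Rightarrow> real \<Rightarrow> bool" where
  "unbalanced_expander n m E d k \<epsilon> \<longleftrightarrow>
     (\<forall>i<n. card {j\<in>{..<m}. E i j} = d) \<and>
     (\<forall>X\<subseteq>{..<n}. card X \<le> k \<longrightarrow>
        real (card (nbhd m E X)) \<ge> (1 - \<epsilon>) * real d * real (card X))"

end

theory Submission imports Defs "HOL-Library.FuncSet" begin

abbreviation PS :: "nat set \<Rightarrow> (nat \<Rightarrow> real) set" where
  "PS X \<equiv> PiE X (\<lambda>_. {-1,1})"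

lemma flip_zero:
  assumes "i \<in> X" "k \<in> X" "i \<noteq> k"
  shows "(\<Sum>\<sigma>\<in>PS X. \<sigma> i * \<sigma> k) = 0"
proof -
  define h where "h = (\<lambda>\<sigma>::nat\<Rightarrow>real. \<sigma>(i := - \<sigma> i))"
  have hh: "h (h \<sigma>) = \<sigma>" for \<sigma> by (auto simp: h_def)
  have hP: "\<sigma> \<in> PS X \<Longrightarrow> h \<sigma> \<in> PS X" for \<sigma>
    using assms(1) by (auto simp: h_def PiE_def Pi_def extensional_def)
  have b: "bij_betw h (PS X) (PS X)"
    by (rule bij_betwI[of h _ _ h]) (auto simp: hP hh)
  have "(\<Sum>\<sigma>\<in>PS X. \<sigma> i * \<sigma> k) = (\<Sum>\<sigma>\<in>PS X. h \<sigma> i * h \<sigma> k)"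
    using sum.reindex_bij_betw[OF b, of "\<lambda>\<sigma>. \<sigma> i * \<sigma> k"] by simp
  also have "\<dots> = - (\<Sum>\<sigma>\<in>PS X. \<sigma> i * \<sigma> k)"
    using assms(3) by (simp add: h_def sum_negf[symmetric])
  finally show ?thesis by simp
qed

lemma second_moment:
  assumes "finite X" "C \<subseteq> X"
  shows "(\<Sum>\<sigma>\<in>PS X. (\<Sum>i\<in>C. \<sigma> i)^2) = real (card (PS X)) * card C"
proof -
  have fC: "finite C" using assms finite_subset by blast
  have "(\<Sum>\<sigma>\<in>PS X. (\<Sum>i\<in>C. \<sigma> i)^2) = (\<Sum>\<sigma>\<in>PS X. \<Sum>i\<in>C. \<Sum>k\<in>C. \<sigma> i * \<sigma> k)"
    by (simp add: power2_eq_square sum_product)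
  also have "\<dots> = (\<Sum>i\<in>C. \<Sum>k\<in>C. \<Sum>\<sigma>\<in>PS X. \<sigma> i * \<sigma> k)"
    by (simp add: sum.swap[of _ "PS X"] sum.swap[of _ "PS X" C])
  also have "\<dots> = (\<Sum>i\<in>C. real (card (PS X)))"
  proof (rule sum.cong[OF refl])
    fix i assume iC: "i \<in> C"
    have "(\<Sum>k\<in>C. \<Sum>\<sigma>\<in>PS X. \<sigma> i * \<sigma> k) = (\<Sum>k\<in>C. if k = i then real (card (PS X)) else 0)"
    proof (rule sum.cong[OF refl])
      fix k assume kC: "k \<in> C"
      show "(\<Sum>\<sigma>\<in>PS X. \<sigma> i * \<sigma> k) = (if k = i then real (card (PS X)) else 0)"
      proof (cases "k = i")
        case True
        have "(\<Sum>\<sigma>\<in>PS X. \<sigma> i * \<sigma> k) = (\<Sum>\<sigma>\<in>PS X. 1)"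
          apply (rule sum.cong[OF refl])
          using True iC assms(2) by (auto simp: PiE_def Pi_def)
        then show ?thesis using True by simp
      next
        case False
        then show ?thesis using flip_zero[of i X k] iC kC assms(2) by auto
      qed
    qed
    also have "\<dots> = real (card (PS X))" using iC fC by simp
    finally show "(\<Sum>k\<in>C. \<Sum>\<sigma>\<in>PS X. \<sigma> i * \<sigma> k) = real (card (PS X))" .
  qed
  also have "\<dots> = real (card (PS X)) * card C" by simp
  finally show ?thesis .
qed

lemma first_moment:
  assumes "finite X" "C \<subseteq> X"
  shows "(\<Sum>\<sigma>\<in>PS X. \<bar>\<Sum>i\<in>C. \<sigma> i\<bar>) \<le> real (card (PS X)) * sqrt (card C)"
proof (cases "C = {}")
  case True then show ?thesis by simp
next
  case False
  have fC: "finite C" using assms finite_subset by blast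
  define c where "c = sqrt (card C)"
  have cpos: "c > 0" using False fC by (simp add: c_def card_gt_0_iff)
  have c2: "c^2 = card C" by (simp add: c_def)
  have pt: "2 * c * \<bar>a\<bar> \<le> a^2 + c^2" for a :: real
  proof -
    have "0 \<le> (\<bar>a\<bar> - c)^2" by simp
    then show ?thesis by (simp add: power2_eq_square algebra_simps)
  qed
  have "2 * c * (\<Sum>\<sigma>\<in>PS X. \<bar>\<Sum>i\<in>C. \<sigma> i\<bar>) = (\<Sum>\<sigma>\<in>PS X. 2 * c * \<bar>\<Sum>i\<in>C. \<sigma> i\<bar>)"
    by (simp add: sum_distrib_left)
  also have "\<dots> \<le> (\<Sum>\<sigma>\<in>PS X. (\<Sum>i\<in>C. \<sigma> i)^2 + c^2)"
    by (rule sum_mono) (rule pt)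
  also have "\<dots> = real (card (PS X)) * card C + real (card (PS X)) * c^2"
    by (simp add: sum.distrib second_moment[OF assms])
  also have "\<dots> = 2 * c * (real (card (PS X)) * c)" using c2 by (simp add: power2_eq_square algebra_simps)
  finally show ?thesis using cpos by (simp add: c_def)
qed

lemma sqrt_bound:
  "sqrt (real c) \<le> (sqrt 2 - 1) * real c + (2 - sqrt 2) * (if c = 0 then 0 else 1)"
proof (cases "c = 0")
  case True then show ?thesis by simp
next
  case False
  define r where "r = sqrt (real c)"
  have r2: "r^2 = real c" by (simp add: r_def)
  have s2: "sqrt 2 ^ 2 = (2::real)" by simp
  have "r = 1 \<or> r \<ge> sqrt 2"
  proof (cases "c = 1")
    case True then show ?thesis by (simp add: r_def)
  next
    case False
    with \<open>c \<noteq> 0\<close> have "real c \<ge> 2" by simp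
    then show ?thesis by (simp add: r_def)
  qed
  moreover have "sqrt 2 \<ge> (1::real)" by simp
  ultimately have "0 \<le> (sqrt 2 - 1) * ((r - 1) * (r - sqrt 2))"
    by (metis diff_ge_0_iff_ge diff_self mult_eq_0_iff mult_nonneg_nonneg order.trans order_refl)
  also have "\<dots> = (sqrt 2 - 1) * r^2 - r + (2 - sqrt 2)"
    using s2 by (simp add: power2_eq_square algebra_simps)
  finally show ?thesis using False r2 by (simp add: r_def)
qed


lemma l1: fixes S d L \<delta> :: real assumes "S*d \<le> 1+\<delta>" "1+\<delta>>0" "S>0" "L>0"
  shows "d * L / (1 + \<delta>) \<le> L / S"
proof -
  have "d * L * S \<le> L * (1+\<delta>)" using assms mult_left_mono[OF assms(1), of L] by (simp add: algebra_simps)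
  then show ?thesis using assms by (simp add: divide_simps)
qed
lemma l2: fixes S x y :: real assumes "L \<le> S * y" "S > 0" shows "L / S \<le> y"
  using assms by (simp add: divide_simps mult.commute)
lemma l3: fixes a \<delta> D K :: real assumes "1+\<delta>>0" "a<2" "D / (1 + \<delta>) \<le> (a - 1) * D + (2 - a) * K"
  shows "(1 - (1 - 1 / (1 + \<delta>)) / (2 - a)) * D \<le> K"
proof -
  have eq: "(1 - (1 - 1 / (1 + \<delta>)) / (2 - a)) * D = (D / (1 + \<delta>) - (a - 1) * D) / (2 - a)"
  proof -
    have p: "(2 - a) * (1 + \<delta>) > 0" using assms(1,2) by simp
    have q: "2 + \<delta> * 2 - (a + \<delta> * a) = (2 - a) * (1 + \<delta>)" by (simp add: algebra_simps)
    have "2 - a \<noteq> 0" "1 + \<delta> \<noteq> 0" "2 + \<delta> * 2 - (a + \<delta> * a) \<noteq> 0" using assms(1,2) p q by auto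
    then show ?thesis by (simp add: field_simps)
  qed
  have "D / (1 + \<delta>) - (a - 1) * D \<le> (2-a) * K" using assms(3) by linarith
  then show ?thesis unfolding eq using assms(2) by (simp add: divide_le_eq mult.commute)
qed

theorem theorem2:
  fixes m n d s :: nat and \<Phi> :: "nat \<Rightarrow> nat \<Rightarrow> real" and S \<delta> :: real
  assumes entries: "\<forall>j<m. \<forall>i<n. \<Phi> j i = 0 \<or> \<Phi> j i = 1"
    and columns: "\<forall>i<n. card {j\<in>{..<m}. \<Phi> j i = 1} = d"
    and S_pos: "S > 0"
    and rip: "RIP m n (\<lambda>j i. S * \<Phi> j i) 1 s \<delta>"
  shows "unbalanced_expander n m (\<lambda>i j. \<Phi> j i = 1) d s
           ((1 - 1 / (1 + \<delta>)) / (2 - sqrt 2))"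
  unfolding unbalanced_expander_def
proof (intro conjI allI impI)
  fix i assume "i < n" then show "card {j \<in> {..<m}. \<Phi> j i = 1} = d" using columns by simp
next
  fix X assume XA: "X \<subseteq> {..<n}" and Xs: "card X \<le> s"
  have fX: "finite X" using XA finite_subset by blast
  define C where "C j = {i\<in>X. \<Phi> j i = 1}" for j
  have CX: "C j \<subseteq> X" for j by (auto simp: C_def)
  have key: "real (card X) \<le> S * (\<Sum>j<m. \<bar>\<Sum>i\<in>C j. \<sigma> i\<bar>) \<and>
             S * (\<Sum>j<m. \<bar>\<Sum>i\<in>C j. \<sigma> i\<bar>) \<le> (1 + \<delta>) * real (card X)"
    if sig: "\<forall>i\<in>X. \<sigma> i = -1 \<or> \<sigma> i = 1" for \<sigma>
  proof -
    define x where "x i = (if i \<in> X then \<sigma> i else 0)" for i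
    have nz: "{i\<in>{..<n}. x i \<noteq> 0} = X" using XA sig by (auto simp: x_def)
    have sp: "sparse n s x" unfolding sparse_def using nz Xs XA by (auto simp: x_def)
    have n1: "lpnorm 1 n x = real (card X)"
    proof -
      have "(\<Sum>i<n. \<bar>x i\<bar>) = (\<Sum>i\<in>X. \<bar>x i\<bar>)"
        by (rule sum.mono_neutral_right) (use XA in \<open>auto simp: x_def\<close>)
      also have "\<dots> = (\<Sum>i\<in>X. 1)" by (rule sum.cong) (use sig in \<open>auto simp: x_def\<close>)
      finally show ?thesis by (simp add: lpnorm_def)
    qed
    have mv: "mat_vec n (\<lambda>j i. S * \<Phi> j i) x j = S * (\<Sum>i\<in>C j. \<sigma> i)" if "j < m" for j
    proof -
      have "(\<Sum>i<n. S * \<Phi> j i * x i) = (\<Sum>i\<in>X. S * \<Phi> j i * x i)"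
        by (rule sum.mono_neutral_right) (use XA in \<open>auto simp: x_def\<close>)
      also have "\<dots> = (\<Sum>i\<in>X. S * (if \<Phi> j i = 1 then \<sigma> i else 0))"
        apply (rule sum.cong[OF refl])
        using entries that XA by (force simp: x_def)
      also have "\<dots> = S * (\<Sum>i\<in>C j. \<sigma> i)"
        by (simp add: sum_distrib_left[symmetric] sum.inter_filter[OF fX] C_def)
      finally show ?thesis by (simp add: mat_vec_def)
    qed
    have n2: "lpnorm 1 m (mat_vec n (\<lambda>j i. S * \<Phi> j i) x) = S * (\<Sum>j<m. \<bar>\<Sum>i\<in>C j. \<sigma> i\<bar>)"
    proof -
      have "(\<Sum>j<m. \<bar>mat_vec n (\<lambda>j i. S * \<Phi> j i) x j\<bar>) = (\<Sum>j<m. S * \<bar>\<Sum>i\<in>C j. \<sigma> i\<bar>)"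
        by (rule sum.cong[OF refl]) (use S_pos mv in \<open>auto simp: abs_mult\<close>)
      moreover have "0 \<le> (\<Sum>j<m. S * \<bar>\<Sum>i\<in>C j. \<sigma> i\<bar>)"
        by (intro sum_nonneg) (use S_pos in auto)
      ultimately show ?thesis by (simp add: lpnorm_def sum_distrib_left)
    qed
    show ?thesis using rip sp n1 n2 unfolding RIP_def by metis
  qed
  show "(1 - (1 - 1 / (1 + \<delta>)) / (2 - sqrt 2)) * real d * real (card X)
        \<le> real (card (nbhd m (\<lambda>i j. \<Phi> j i = 1) X))"
  proof (cases "X = {}")
    case True then show ?thesis by simp
  next
    case False
    have Xpos: "real (card X) > 0" using False fX by (simp add: card_gt_0_iff)
    have dc: "(\<Sum>j<m. real (card (C j))) = real d * real (card X)"
    proof -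
      have "(\<Sum>j<m. real (card (C j))) = (\<Sum>j<m. \<Sum>i\<in>X. if \<Phi> j i = 1 then 1 else (0::real))"
        by (simp add: C_def sum.If_cases[OF fX] Int_def)
      also have "\<dots> = (\<Sum>i\<in>X. \<Sum>j<m. if \<Phi> j i = 1 then 1 else (0::real))"
        by (rule sum.swap)
      also have "\<dots> = (\<Sum>i\<in>X. real d)"
      proof (rule sum.cong[OF refl])
        fix i assume "i \<in> X"
        then have "i < n" using XA by auto
        then show "(\<Sum>j<m. if \<Phi> j i = 1 then 1 else (0::real)) = real d"
          using columns by (simp add: sum.If_cases Int_def)
      qed
      finally show ?thesis by simp
    qed
    have nb: "(\<Sum>j<m. if C j = {} then 0 else (1::real)) = real (card (nbhd m (\<lambda>i j. \<Phi> j i = 1) X))"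
    proof -
      have "nbhd m (\<lambda>i j. \<Phi> j i = 1) X = {..<m} \<inter> {j. C j \<noteq> {}}"
        by (auto simp: nbhd_def C_def)
      then show ?thesis by (simp add: sum.If_cases Int_def)
    qed
    have "S * (\<Sum>j<m. real (card (C j))) \<le> (1 + \<delta>) * real (card X)"
      using key[of "\<lambda>_. 1"] by simp
    then have Sd_up: "S * real d \<le> 1 + \<delta>" using dc Xpos by (simp add: mult.assoc[symmetric])
    have "real (card X) \<le> S * (\<Sum>j<m. real (card (C j)))"
      using key[of "\<lambda>_. 1"] by simp
    then have Sd_lo: "1 \<le> S * real d" using dc Xpos by (simp add: mult.assoc[symmetric])
    define N where "N = real (card (PS X))"
    have Npos: "N > 0" by (simp add: N_def card_PiE[OF fX] card_gt_0_iff fX)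
    have "N * real (card X) = (\<Sum>\<sigma>\<in>PS X. real (card X))" by (simp add: N_def)
    also have "\<dots> \<le> (\<Sum>\<sigma>\<in>PS X. S * (\<Sum>j<m. \<bar>\<Sum>i\<in>C j. \<sigma> i\<bar>))"
      by (rule sum_mono) (use key in \<open>auto simp: PiE_def Pi_def\<close>)
    also have "\<dots> = S * (\<Sum>j<m. \<Sum>\<sigma>\<in>PS X. \<bar>\<Sum>i\<in>C j. \<sigma> i\<bar>)"
      by (simp add: sum_distrib_left sum.swap[of _ "PS X"])
    also have "\<dots> \<le> S * (\<Sum>j<m. N * sqrt (card (C j)))"
      using S_pos by (auto intro!: mult_left_mono sum_mono first_moment[OF fX CX] simp: N_def)
    finally have "N * real (card X) \<le> N * (S * (\<Sum>j<m. sqrt (card (C j))))"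
      by (simp add: sum_distrib_left algebra_simps)
    then have avg: "real (card X) \<le> S * (\<Sum>j<m. sqrt (card (C j)))" using Npos by simp
    have "(\<Sum>j<m. sqrt (card (C j))) \<le> (\<Sum>j<m. (sqrt 2 - 1) * real (card (C j)) + (2 - sqrt 2) * (if C j = {} then 0 else 1))"
    proof (rule sum_mono)
      fix j
      have "finite (C j)" using finite_subset[OF CX fX] .
      then have "(card (C j) = 0) = (C j = {})" by simp
      then show "sqrt (real (card (C j))) \<le> (sqrt 2 - 1) * real (card (C j)) + (2 - sqrt 2) * (if C j = {} then 0 else 1)"
        using sqrt_bound[of "card (C j)"] by simp
    qed
    also have "\<dots> = (sqrt 2 - 1) * (real d * real (card X)) + (2 - sqrt 2) * real (card (nbhd m (\<lambda>i j. \<Phi> j i = 1) X))"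
      unfolding sum.distrib sum_distrib_left[symmetric] dc nb[symmetric] by (rule refl)
    finally have main: "real (card X) \<le> S * ((sqrt 2 - 1) * (real d * real (card X)) + (2 - sqrt 2) * real (card (nbhd m (\<lambda>i j. \<Phi> j i = 1) X)))"
      using avg S_pos by (meson mult_left_mono order.trans less_imp_le)
    define a where "a = sqrt (2::real)"
    define K where "K = real (card (nbhd m (\<lambda>i j. \<Phi> j i = 1) X))"
    define L where "L = real (card X)"
    have "sqrt 2 < sqrt (4::real)" by (rule real_sqrt_less_mono) simp
    then have a2: "a < 2" "a > 1" by (simp_all add: a_def)
    have dp: "1 + \<delta> > 0" using Sd_lo Sd_up by linarith
    have m2: "L \<le> S * ((a - 1) * (real d * L) + (2 - a) * K)" using main by (simp add: a_def K_def L_def)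
    have "real d * L / (1 + \<delta>) \<le> L / S"
      by (rule l1) (use Sd_up dp S_pos Xpos in \<open>auto simp: L_def\<close>)
    also have "\<dots> \<le> (a - 1) * (real d * L) + (2 - a) * K" by (rule l2[OF m2 S_pos])
    finally have m3: "real d * L / (1 + \<delta>) \<le> (a - 1) * (real d * L) + (2 - a) * K" .
    have "(1 - (1 - 1 / (1 + \<delta>)) / (2 - a)) * (real d * L) \<le> K"
      by (rule l3[OF dp a2(1) m3])
    then show ?thesis by (simp add: a_def K_def L_def mult.assoc)
  qed
qed

end
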